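(* Assume the Hashimoto matrix $B$ is irreducible. Let $\mathbf{p}:[0,1]\to(0,1]^E$ be continuous and set $\rho(\lambda):=\rho\big(B^T\mathrm{diag}(\mathbf{p}(\lambda))\big)$. Suppose a continuous phase transition occurs at $\lambda_c\in[0,1)$, i.e. $\mathbf{Q}(\mathbf{p}(\lambda))\to\mathbf{1}$ as $\lambda\to\lambda_c$, and there is a sequence $\lambda_n\to\lambda_c$ with $\mathbf{Q}(\mathbf{p}(\lambda_n))\neq\mathbf{1}$ for all $n$. Then $\rho(\lambda_c)=1$.
   Context: $\mathcal{G}=(V,E)$ is a finite directed graph, edges written $i\to j$, $M=|E|$; $\mathcal{N}^-(j)=\{k:\,k\to j\in E\}$. The Hashimoto matrix is $B_{i\to j,\,k\to l}=\delta_{jk}(1-\delta_{il})$; it is irreducible iff the directed graph on $E$ with an arc from $e$ to $e'$ whenever $B_{e,e'}\neq 0$ is strongly connected. $\rho$ denotes spectral radius. For $\mathbf{p}\in[0,1]^E$ define $\mathbf{F}(\cdot;\mathbf{p}):[0,1]^E\to[0,1]^E$ componentwise: for the edge $j\to i$, $$F_{j\to i}(\mathbf{y};\mathbf{p})=\prod_{k\in\mathcal{N}^-(j)\setminus\{i\}}\big(1-p_{k\to j}+p_{k\to j}\,y_{k\to j}\big)$$ (empty product $=1$), so that $\mathbf{F}'(\mathbf{1};\mathbf{p})=B^T\mathrm{diag}(\mathbf{p})$. $\mathbf{Q}(\mathbf{p})$ denotes the componentwise smallest fixed point of $\mathbf{F}(\cdot;\mathbf{p})$ in $[0,1]^E$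 (limit of iterates of $\mathbf{F}$ from $\mathbf{0}$). *)

theory Defs
  imports Complex_Main "Jordan_Normal_Form.Spectral_Radius"
begin

(* Directed graph: vertex type 'v, finite edge set E; an edge i->j is the pair (i,j).
   Vectors in [0,1]^E are represented as functions ('v \<times> 'v) \<Rightarrow> real,
   only their values on E are relevant. *)

(* Arcs of the non-backtracking (Hashimoto) structure: B_{i->j,k->l} = [j=k][i\<noteq>l] *)
definition hash_rel :: "('v \<times> 'v) set \<Rightarrow> (('v \<times> 'v) \<times> ('v \<times> 'v)) set" where
  "hash_rel E = {(e, e'). e \<in> E \<and> e' \<in> E \<and> snd e = fst e' \<and> fst e \<noteq> snd e'}"

(* B irreducible: the directed graph on E with arcs e -> e' whenever B_{e,e'} \<noteq> 0
   is strongly connected *)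
definition hashimoto_irreducible :: "('v \<times> 'v) set \<Rightarrow> bool" where
  "hashimoto_irreducible E \<longleftrightarrow> (\<forall>e\<in>E. \<forall>e'\<in>E. (e, e') \<in> (hash_rel E)\<^sup>*)"

definition edge_list :: "('v \<times> 'v) set \<Rightarrow> ('v \<times> 'v) list" where
  "edge_list E = (SOME es. distinct es \<and> set es = E)"

definition hashimoto :: "('v \<times> 'v) set \<Rightarrow> complex mat" where
  "hashimoto E = (let es = edge_list E in
     mat (length es) (length es)
       (\<lambda>(a, b). if (es ! a, es ! b) \<in> hash_rel E then 1 else 0))"

definition hashimoto_T_diag :: "('v \<times> 'v) set \<Rightarrow> ('v \<times> 'v \<Rightarrow> real) \<Rightarrow> complex mat" where
  "hashimoto_T_diag E p = (let es = edge_list E in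
     transpose_mat (hashimoto E) * mat_diag (length es) (\<lambda>i. complex_of_real (p (es ! i))))"

definition rho_BTp :: "('v \<times> 'v) set \<Rightarrow> ('v \<times> 'v \<Rightarrow> real) \<Rightarrow> real" where
  "rho_BTp E p = spectral_radius (hashimoto_T_diag E p)"

definition Fmap :: "('v \<times> 'v) set \<Rightarrow> ('v \<times> 'v \<Rightarrow> real) \<Rightarrow> ('v \<times> 'v \<Rightarrow> real) \<Rightarrow> ('v \<times> 'v \<Rightarrow> real)" where
  "Fmap E p y = (\<lambda>(j, i). \<Prod>k\<in>{k. (k, j) \<in> E \<and> k \<noteq> i}.
       1 - p (k, j) + p (k, j) * y (k, j))"

(* Q(p): smallest fixed point of F(.;p) in [0,1]^E, as the limit of the iterates of F from 0 *)
definition Qfix :: "('v \<times> 'v) set \<Rightarrow> ('v \<times> 'v \<Rightarrow> real) \<Rightarrow> ('v \<times> 'v \<Rightarrow> real)" where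
  "Qfix E p = (\<lambda>e. lim (\<lambda>n. ((Fmap E p) ^^ n) (\<lambda>_. 0) e))"

end

theory Submission
  imports Defs
begin


definition preds :: "('v \<times> 'v) set \<Rightarrow> ('v \<times> 'v) \<Rightarrow> ('v \<times> 'v) set" where
  "preds E e' = {e\<in>E. snd e = fst e' \<and> fst e \<noteq> snd e'}"

lemma preds_sub: "preds E e' \<subseteq> E" unfolding preds_def by auto

lemma finite_preds: "finite E \<Longrightarrow> finite (preds E e')"
  using preds_sub finite_subset by metis

lemma hash_preds: "e' \<in> E \<Longrightarrow> (e, e') \<in> hash_rel E \<longleftrightarrow> e \<in> preds E e'"
  unfolding preds_def hash_rel_def by auto

lemma Fmap_preds: "Fmap E p y e' = (\<Prod>e\<in>preds E e'. 1 - p e + p e * y e)"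
proof -
  obtain j i where e': "e' = (j, i)" by (cases e')
  have "preds E e' = (\<lambda>k. (k, j)) ` {k. (k, j) \<in> E \<and> k \<noteq> i}"
    unfolding preds_def e' by force
  moreover have "inj_on (\<lambda>k. (k, j)) {k. (k, j) \<in> E \<and> k \<noteq> i}" by (auto simp: inj_on_def)
  ultimately show ?thesis unfolding Fmap_def e'
    by (simp add: prod.reindex)
qed

lemma edge_list_prop: assumes "finite E" shows "distinct (edge_list E) \<and> set (edge_list E) = E"
  unfolding edge_list_def using finite_distinct_list[OF assms]
  by (metis (mono_tags, lifting) someI_ex)

lemma sum_es: assumes "distinct es"
  shows "(\<Sum>b<length es. f (es ! b)) = (\<Sum>e\<in>set es. f e)"
proof -
  have "inj_on (nth es) {..<length es}" using assms by (simp add: inj_on_nth)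
  moreover have "nth es ` {..<length es} = set es" by (auto simp: set_conv_nth)
  ultimately show ?thesis using sum.reindex[of "nth es" "{..<length es}" f] by simp
qed

lemma spec_one:
  fixes E :: "('v \<times> 'v) set" and p w :: "'v \<times> 'v \<Rightarrow> real"
  assumes fin: "finite E" and ne: "E \<noteq> {}"
    and p0: "\<forall>e\<in>E. 0 \<le> p e" and wpos: "\<forall>e\<in>E. 0 < w e"
    and eig: "\<forall>e'\<in>E. w e' = (\<Sum>e\<in>preds E e'. p e * w e)"
  shows "rho_BTp E p = 1"
proof -
  define es where "es = edge_list E"
  define n where "n = length es"
  have dist: "distinct es" and ses: "set es = E" using edge_list_prop[OF fin] es_def by auto
  have n0: "n > 0" using ne ses n_def by auto
  have esE: "\<And>a. a < n \<Longrightarrow> es ! a \<in> E" using ses n_def by auto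
  define m where "m = (\<lambda>a b. if (es ! b, es ! a) \<in> hash_rel E then p (es ! b) else 0)"
  define M where "M = hashimoto_T_diag E p"
  have Mdef: "M = mat n n (\<lambda>(a, b). complex_of_real (m a b))"
  proof -
    have H: "transpose_mat (hashimoto E) \<in> carrier_mat n n"
      unfolding hashimoto_def Let_def es_def[symmetric] n_def by simp
    show ?thesis unfolding M_def hashimoto_T_diag_def Let_def es_def[symmetric] n_def[symmetric]
      apply (subst mat_diag_mult_right[OF H])
      apply (rule eq_matI)
      by (auto simp: m_def hashimoto_def Let_def es_def[symmetric] n_def[symmetric])
  qed
  have Mc: "M \<in> carrier_mat n n" unfolding Mdef by simp
  have m0: "\<And>a b. 0 \<le> m a b" unfolding m_def using p0 esE
    by (auto simp: hash_rel_def)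
  have K: "\<And>a. a < n \<Longrightarrow> (\<Sum>b<n. m a b * w (es ! b)) = w (es ! a)"
  proof -
    fix a assume a: "a < n"
    have "(\<Sum>b<n. m a b * w (es ! b))
        = (\<Sum>e\<in>E. if (e, es ! a) \<in> hash_rel E then p e * w e else 0)"
    proof -
      have "(\<Sum>b<n. m a b * w (es ! b)) = (\<Sum>b<length es. (\<lambda>e. if (e, es ! a) \<in> hash_rel E then p e * w e else 0) (es ! b))"
        unfolding n_def m_def by (rule sum.cong) auto
      thus ?thesis using sum_es[OF dist, of "\<lambda>e. if (e, es ! a) \<in> hash_rel E then p e * w e else 0"] ses
        by simp
    qed
    also have "\<dots> = (\<Sum>e\<in>{e\<in>E. (e, es ! a) \<in> hash_rel E}. p e * w e)"
      using fin by (simp add: sum.inter_filter)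
    also have "{e\<in>E. (e, es ! a) \<in> hash_rel E} = preds E (es ! a)"
      using hash_preds[OF esE[OF a]] preds_sub by blast
    also have "(\<Sum>e\<in>preds E (es ! a). p e * w e) = w (es ! a)" using eig esE[OF a] by simp
    finally show "(\<Sum>b<n. m a b * w (es ! b)) = w (es ! a)" .
  qed
  have Mv: "\<And>X a. X \<in> carrier_vec n \<Longrightarrow> a < n \<Longrightarrow> (M *\<^sub>v X) $ a = (\<Sum>b<n. complex_of_real (m a b) * X $ b)"
    unfolding Mdef by (auto simp: scalar_prod_def lessThan_atLeast0)
  define W where "W = vec n (\<lambda>b. complex_of_real (w (es ! b)))"
  have Wc: "W \<in> carrier_vec n" unfolding W_def by simp
  have "eigenvector M W 1"
    unfolding eigenvector_def
  proof (intro conjI)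
    show "W \<in> carrier_vec (dim_row M)" using Wc Mc by simp
    show "W \<noteq> 0\<^sub>v (dim_row M)"
    proof
      assume "W = 0\<^sub>v (dim_row M)"
      hence "W $ 0 = 0" using n0 Mc by simp
      moreover have "W $ 0 = complex_of_real (w (es ! 0))" unfolding W_def using n0 by (rule index_vec)
      moreover have "w (es ! 0) > 0" using wpos esE[OF n0] by blast
      ultimately show False by simp
    qed
    show "M *\<^sub>v W = 1 \<cdot>\<^sub>v W"
    proof (rule eq_vecI)
      fix a assume "a < dim_vec (1 \<cdot>\<^sub>v W)"
      hence a: "a < n" using Wc by simp
      have "(M *\<^sub>v W) $ a = (\<Sum>b<n. complex_of_real (m a b) * W $ b)" using Mv[OF Wc a] .
      also have "\<dots> = complex_of_real (\<Sum>b<n. m a b * w (es ! b))" unfolding W_def by simp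
      also have "\<dots> = W $ a" using K[OF a] a unfolding W_def by simp
      finally show "(M *\<^sub>v W) $ a = (1 \<cdot>\<^sub>v W) $ a" using a Wc by simp
    qed (use Wc Mc in simp)
  qed
  hence one: "1 \<in> spectrum M" unfolding spectrum_def eigenvalue_def by auto
  have ge: "1 \<le> spectral_radius M"
    using spectral_radius_mem_max(2)[OF Mc n0, of 1] one by force
  obtain mu where mu: "mu \<in> spectrum M" and rmu: "spectral_radius M = norm mu"
    using spectral_radius_mem_max(1)[OF Mc n0] by auto
  obtain X where ev: "eigenvector M X mu" using mu unfolding spectrum_def eigenvalue_def by auto
  have Xc: "X \<in> carrier_vec n" and Xn: "X \<noteq> 0\<^sub>v n" and MX: "M *\<^sub>v X = mu \<cdot>\<^sub>v X"
    using ev Mc unfolding eigenvector_def by auto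
  define f where "f = (\<lambda>b. norm (X $ b) / w (es ! b))"
  obtain a0 where a0: "a0 < n" and amax: "\<forall>b<n. f b \<le> f a0"
  proof -
    have "finite (f ` {..<n})" "f ` {..<n} \<noteq> {}" using n0 by auto
    then obtain a0 where "a0 \<in> {..<n}" "f a0 = Max (f ` {..<n})"
      using Max_in by (metis imageE)
    thus ?thesis using that by (metis Max_ge \<open>finite (f ` {..<n})\<close> image_eqI lessThan_iff)
  qed
  define c where "c = f a0"
  have wp: "\<And>b. b < n \<Longrightarrow> 0 < w (es ! b)" using wpos esE by auto
  have Xle: "\<And>b. b < n \<Longrightarrow> norm (X $ b) \<le> c * w (es ! b)"
    using amax wp unfolding c_def f_def by (simp add: pos_divide_le_eq)
  have Xa0: "norm (X $ a0) = c * w (es ! a0)" using wp[OF a0] unfolding c_def f_def by simp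
  have Xa0pos: "norm (X $ a0) > 0"
  proof (rule ccontr)
    assume "\<not> norm (X $ a0) > 0"
    hence "norm (X $ a0) = 0" using norm_ge_zero[of "X $ a0"] by linarith
    hence "c * w (es ! a0) = 0" using Xa0 by simp
    hence "c = 0" using wp[OF a0] by simp
    have "\<forall>b<n. X $ b = 0"
    proof (intro allI impI)
      fix b assume "b < n"
      hence "norm (X $ b) \<le> 0" using Xle[of b] \<open>c = 0\<close> by simp
      thus "X $ b = 0" by simp
    qed
    hence "X = 0\<^sub>v n" using Xc by (intro eq_vecI) auto
    thus False using Xn by simp
  qed
  have "norm mu * norm (X $ a0) = norm ((M *\<^sub>v X) $ a0)" using MX a0 Xc by (simp add: norm_mult)
  also have "\<dots> = norm (\<Sum>b<n. complex_of_real (m a0 b) * X $ b)" using Mv[OF Xc a0] by simp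
  also have "\<dots> \<le> (\<Sum>b<n. norm (complex_of_real (m a0 b) * X $ b))" by (rule norm_sum)
  also have "\<dots> \<le> (\<Sum>b<n. m a0 b * (c * w (es ! b)))"
  proof (rule sum_mono)
    fix b assume "b \<in> {..<n}"
    hence b: "b < n" by simp
    have "norm (complex_of_real (m a0 b) * X $ b) = m a0 b * norm (X $ b)"
      using m0[of a0 b] by (simp add: norm_mult)
    also have "\<dots> \<le> m a0 b * (c * w (es ! b))" using m0[of a0 b] Xle[OF b] by (rule mult_left_mono[rotated])
    finally show "norm (complex_of_real (m a0 b) * X $ b) \<le> m a0 b * (c * w (es ! b))" .
  qed
  also have "\<dots> = c * (\<Sum>b<n. m a0 b * w (es ! b))" by (simp add: sum_distrib_left algebra_simps)
  also have "\<dots> = norm (X $ a0)" using K[OF a0] Xa0 by simp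
  finally have "norm mu \<le> 1" using Xa0pos by simp
  thus ?thesis using ge rmu unfolding rho_BTp_def M_def by simp
qed



lemma prod_bounds:
  fixes a :: "'a \<Rightarrow> real"
  assumes "finite S" "\<forall>i\<in>S. 0 \<le> a i \<and> a i \<le> 1"
  shows "1 - sum a S \<le> (\<Prod>i\<in>S. 1 - a i) \<and> (\<Prod>i\<in>S. 1 - a i) \<le> 1 - sum a S + (sum a S)^2"
  using assms
proof (induction S rule: finite_induct)
  case empty then show ?case by simp
next
  case (insert x F)
  define P where "P = (\<Prod>i\<in>F. 1 - a i)"
  define s where "s = sum a F"
  have IH: "1 - s \<le> P" "P \<le> 1 - s + s^2" using insert unfolding P_def s_def by auto
  have ax: "0 \<le> a x" "a x \<le> 1" using insert by auto
  have s0: "0 \<le> s" unfolding s_def using insert by (auto intro: sum_nonneg)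
  have P0: "0 \<le> P" unfolding P_def using insert by (auto intro: prod_nonneg)
  have eq1: "(\<Prod>i\<in>insert x F. 1 - a i) = (1 - a x) * P" using insert unfolding P_def by simp
  have eq2: "sum a (insert x F) = a x + s" using insert unfolding s_def by simp
  have "1 - (a x + s) \<le> (1 - a x) * P"
  proof -
    have "(1 - a x) * (1 - s) \<le> (1 - a x) * P" using IH(1) ax by (intro mult_left_mono) auto
    moreover have "1 - (a x + s) \<le> (1 - a x) * (1 - s)" using ax s0 by (simp add: algebra_simps)
    ultimately show ?thesis by linarith
  qed
  moreover have "(1 - a x) * P \<le> 1 - (a x + s) + (a x + s)^2"
  proof -
    have "(1 - a x) * P = P - a x * P" by (simp add: algebra_simps)
    also have "\<dots> \<le> (1 - s + s^2) - a x * (1 - s)" using IH ax mult_left_mono[OF IH(1) ax(1)] by linarith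
    also have "\<dots> \<le> 1 - (a x + s) + (a x + s)^2" using ax s0 by (simp add: power2_eq_square algebra_simps)
    finally show ?thesis .
  qed
  ultimately show ?case unfolding eq1 eq2 by simp
qed

lemma prod_star:
  fixes a :: "'a \<Rightarrow> real"
  assumes "finite S" "\<forall>i\<in>S. 0 \<le> a i \<and> a i \<le> 1" "0 \<le> t" "t \<le> 1"
  shows "(\<Prod>i\<in>S. 1 - t * a i) \<le> 1 - t + t * (\<Prod>i\<in>S. 1 - a i)"
  using assms
proof (induction S rule: finite_induct)
  case empty then show ?case by simp
next
  case (insert x F)
  define P where "P = (\<Prod>i\<in>F. 1 - t * a i)"
  define c where "c = (\<Prod>i\<in>F. 1 - a i)"
  have IH: "P \<le> 1 - t + t * c" using insert unfolding P_def c_def by auto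
  have ax: "0 \<le> a x" "a x \<le> 1" using insert by auto
  have c0: "0 \<le> c" "c \<le> 1" unfolding c_def using insert by (auto intro: prod_nonneg prod_le_1)
  have "(\<Prod>i\<in>insert x F. 1 - t * a i) = (1 - t * a x) * P" using insert unfolding P_def by simp
  also have "\<dots> \<le> (1 - t * a x) * (1 - t + t * c)"
    using IH ax insert.prems by (intro mult_left_mono) (auto simp: mult_le_one)
  also have "\<dots> \<le> 1 - t + t * ((1 - a x) * c)"
  proof -
    have "0 \<le> a x * t * (1 - t) * (1 - c)" using ax c0 insert.prems by auto
    thus ?thesis by (simp add: algebra_simps)
  qed
  also have "(1 - a x) * c = (\<Prod>i\<in>insert x F. 1 - a i)" using insert unfolding c_def by simp
  finally show ?case .
qed

lemma prod_eq_factors: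
  fixes f g :: "'a \<Rightarrow> real"
  assumes "finite S" "\<forall>i\<in>S. 0 \<le> f i \<and> f i \<le> g i" "prod f S = prod g S" "prod g S > 0" "j \<in> S"
  shows "f j = g j"
proof (rule ccontr)
  assume ne: "f j \<noteq> g j"
  hence lt: "f j < g j" using assms by force
  have "prod g S = g j * prod g (S - {j})" using assms by (simp add: prod.remove)
  have gr: "prod g (S - {j}) > 0"
  proof -
    have "g j \<ge> 0" using assms by force
    have "prod g (S - {j}) \<ge> 0" using assms by (force intro: prod_nonneg)
    thus ?thesis using \<open>prod g S = g j * prod g (S - {j})\<close> assms(4)
      by (metis less_eq_real_def mult_zero_right)
  qed
  have "prod f (S - {j}) \<le> prod g (S - {j})" using assms by (intro prod_mono) auto
  have f0: "0 \<le> f j" using assms by auto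
  have "prod f S = f j * prod f (S - {j})" using assms by (simp add: prod.remove)
  also have "\<dots> \<le> f j * prod g (S - {j})" using f0 \<open>prod f (S - {j}) \<le> prod g (S - {j})\<close> by (rule mult_left_mono[rotated])
  also have "\<dots> < g j * prod g (S - {j})" using lt gr by simp
  also have "\<dots> = prod g S" using \<open>prod g S = g j * prod g (S - {j})\<close> by simp
  finally show False using assms(3) by simp
qed

definition prange :: "('v \<times> 'v) set \<Rightarrow> ('v \<times> 'v \<Rightarrow> real) \<Rightarrow> bool" where
  "prange E p \<longleftrightarrow> (\<forall>e\<in>E. 0 \<le> p e \<and> p e \<le> 1)"

lemma F01:
  assumes fin: "finite E" and pr: "prange E p" and y: "\<forall>e\<in>E. 0 \<le> y e \<and> y e \<le> 1"
  shows "0 \<le> Fmap E p y e' \<and> Fmap E p y e' \<le> 1"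
proof -
  have "\<forall>e\<in>preds E e'. 0 \<le> 1 - p e + p e * y e \<and> 1 - p e + p e * y e \<le> 1"
  proof
    fix e assume "e \<in> preds E e'"
    hence "e \<in> E" using preds_sub by blast
    hence "0 \<le> p e" "p e \<le> 1" "0 \<le> y e" "y e \<le> 1" using pr y unfolding prange_def by auto
    moreover have "p e * y e \<le> p e" using calculation by (simp add: mult_left_le)
    ultimately show "0 \<le> 1 - p e + p e * y e \<and> 1 - p e + p e * y e \<le> 1"
      by (smt (verit) mult_nonneg_nonneg)
  qed
  thus ?thesis unfolding Fmap_preds by (auto intro: prod_nonneg prod_le_1)
qed

lemma Fnonneg:
  assumes fin: "finite E" and pr: "prange E p" and y: "\<forall>e\<in>E. 0 \<le> y e"
  shows "0 \<le> Fmap E p y e'"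
proof -
  have "\<forall>e\<in>preds E e'. 0 \<le> 1 - p e + p e * y e"
  proof
    fix e assume "e \<in> preds E e'"
    hence "e \<in> E" using preds_sub by blast
    hence "0 \<le> p e" "p e \<le> 1" "0 \<le> y e" using pr y unfolding prange_def by auto
    thus "0 \<le> 1 - p e + p e * y e" by (smt (verit) mult_nonneg_nonneg)
  qed
  thus ?thesis unfolding Fmap_preds by (auto intro: prod_nonneg)
qed

lemma Fmono:
  assumes fin: "finite E" and pr: "prange E p" and y: "\<forall>e\<in>E. 0 \<le> y e \<and> y e \<le> z e"
  shows "Fmap E p y e' \<le> Fmap E p z e'"
proof -
  have "\<forall>e\<in>preds E e'. 0 \<le> 1 - p e + p e * y e \<and> 1 - p e + p e * y e \<le> 1 - p e + p e * z e"
  proof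
    fix e assume "e \<in> preds E e'"
    hence "e \<in> E" using preds_sub by blast
    hence "0 \<le> p e" "p e \<le> 1" "0 \<le> y e" "y e \<le> z e" using pr y unfolding prange_def by auto
    moreover have "p e * y e \<le> p e * z e" using calculation by (simp add: mult_left_mono)
    ultimately show "0 \<le> 1 - p e + p e * y e \<and> 1 - p e + p e * y e \<le> 1 - p e + p e * z e"
      by (smt (verit) mult_nonneg_nonneg)
  qed
  thus ?thesis unfolding Fmap_preds by (intro prod_mono) auto
qed

lemma iter_mono:
  assumes fin: "finite E" and pr: "prange E p" and y: "\<forall>e\<in>E. 0 \<le> y e \<and> y e \<le> z e"
  shows "\<forall>e\<in>E. 0 \<le> (Fmap E p ^^ m) y e \<and> (Fmap E p ^^ m) y e \<le> (Fmap E p ^^ m) z e"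
proof (induction m)
  case 0 then show ?case using y by simp
next
  case (Suc m)
  then show ?case using Fnonneg[OF fin pr] Fmono[OF fin pr] by simp
qed

lemma iter01:
  assumes fin: "finite E" and pr: "prange E p" and y: "\<forall>e\<in>E. 0 \<le> y e \<and> y e \<le> 1"
  shows "\<forall>e\<in>E. 0 \<le> (Fmap E p ^^ m) y e \<and> (Fmap E p ^^ m) y e \<le> 1"
proof (induction m)
  case 0 then show ?case using y by simp
next
  case (Suc m)
  then show ?case using F01[OF fin pr] by simp
qed

lemma it01:
  assumes fin: "finite E" and pr: "prange E p"
  shows "0 \<le> (Fmap E p ^^ n) (\<lambda>_. 0) e \<and> (Fmap E p ^^ n) (\<lambda>_. 0) e \<le> 1"
proof (cases n)
  case 0 then show ?thesis by simp
next
  case (Suc m)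
  have "\<forall>e\<in>E. 0 \<le> (Fmap E p ^^ m) (\<lambda>_. 0) e \<and> (Fmap E p ^^ m) (\<lambda>_. 0) e \<le> 1"
    by (rule iter01[OF fin pr]) simp
  then show ?thesis using Suc F01[OF fin pr] by simp
qed

lemma it_inc:
  assumes fin: "finite E" and pr: "prange E p"
  shows "(Fmap E p ^^ n) (\<lambda>_. 0) e \<le> (Fmap E p ^^ Suc n) (\<lambda>_. 0) e"
proof -
  have "\<forall>e\<in>E. 0 \<le> (\<lambda>_. 0::real) e \<and> (\<lambda>_. 0) e \<le> Fmap E p (\<lambda>_. 0) e"
    using Fnonneg[OF fin pr] by simp
  from iter_mono[OF fin pr this, of n]
  have A: "\<forall>e\<in>E. (Fmap E p ^^ n) (\<lambda>_. 0) e \<le> (Fmap E p ^^ Suc n) (\<lambda>_. 0) e"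
    by (simp add: funpow_Suc_right del: funpow.simps)
  show ?thesis
  proof (cases n)
    case 0 then show ?thesis using Fnonneg[OF fin pr] by simp
  next
    case (Suc k)
    have "\<forall>e\<in>E. 0 \<le> (Fmap E p ^^ k) (\<lambda>_. 0) e \<and> (Fmap E p ^^ k) (\<lambda>_. 0) e \<le> (Fmap E p ^^ Suc k) (\<lambda>_. 0) e"
      using A[unfolded Suc] it01[OF fin pr]
      using iter_mono[OF fin pr \<open>\<forall>e\<in>E. 0 \<le> (\<lambda>_. 0::real) e \<and> (\<lambda>_. 0) e \<le> Fmap E p (\<lambda>_. 0) e\<close>, of k]
      by (simp add: funpow_Suc_right del: funpow.simps)
    then show ?thesis using Suc Fmono[OF fin pr] by simp
  qed
qed

lemma Qfix_lim:
  assumes fin: "finite E" and pr: "prange E p"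
  shows "(\<lambda>n. (Fmap E p ^^ n) (\<lambda>_. 0) e) \<longlonglongrightarrow> Qfix E p e"
proof -
  have "incseq (\<lambda>n. (Fmap E p ^^ n) (\<lambda>_. 0) e)"
    using it_inc[OF fin pr] by (simp add: incseq_Suc_iff)
  moreover have "\<forall>n. (Fmap E p ^^ n) (\<lambda>_. 0) e \<le> 1" using it01[OF fin pr] by blast
  ultimately obtain L where "(\<lambda>n. (Fmap E p ^^ n) (\<lambda>_. 0) e) \<longlonglongrightarrow> L"
    using incseq_convergent by blast
  thus ?thesis unfolding Qfix_def by (simp add: limI)
qed

lemma Qfix01:
  assumes fin: "finite E" and pr: "prange E p"
  shows "0 \<le> Qfix E p e \<and> Qfix E p e \<le> 1"
  using Qfix_lim[OF fin pr, of e] it01[OF fin pr]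
  by (meson LIMSEQ_le_const LIMSEQ_le_const2)

lemma Qfix_fix:
  assumes fin: "finite E" and pr: "prange E p"
  shows "Fmap E p (Qfix E p) e' = Qfix E p e'"
proof -
  define g where "g = (\<lambda>n. (Fmap E p ^^ n) (\<lambda>_. 0))"
  have gl: "\<And>e. (\<lambda>n. g n e) \<longlonglongrightarrow> Qfix E p e" unfolding g_def by (rule Qfix_lim[OF fin pr])
  have "(\<lambda>n. Fmap E p (g n) e') \<longlonglongrightarrow> Fmap E p (Qfix E p) e'"
    unfolding Fmap_preds
    by (intro tendsto_prod tendsto_intros gl)
  hence "(\<lambda>n. Fmap E p ((Fmap E p ^^ n) (\<lambda>_. 0)) e') \<longlonglongrightarrow> Fmap E p (Qfix E p) e'"
    unfolding g_def .
  moreover have "(\<lambda>n. Fmap E p ((Fmap E p ^^ n) (\<lambda>_. 0)) e') \<longlonglongrightarrow> Qfix E p e'"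
    using LIMSEQ_Suc[OF Qfix_lim[OF fin pr, of e']] by simp
  ultimately show ?thesis using LIMSEQ_unique by blast
qed

lemma Qfix_le:
  assumes fin: "finite E" and pr: "prange E p" and N: "N > 0"
    and x0: "\<forall>e\<in>E. 0 \<le> x e" and sup: "\<forall>e\<in>E. (Fmap E p ^^ N) x e \<le> x e"
  shows "\<forall>e\<in>E. Qfix E p e \<le> x e"
proof -
  have step: "\<forall>e\<in>E. (Fmap E p ^^ (N * k)) (\<lambda>_. 0) e \<le> x e" for k
  proof (induction k)
    case 0 then show ?case using x0 by simp
  next
    case (Suc k)
    have "\<forall>e\<in>E. 0 \<le> (Fmap E p ^^ (N * k)) (\<lambda>_. 0) e \<and> (Fmap E p ^^ (N * k)) (\<lambda>_. 0) e \<le> x e"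
      using Suc it01[OF fin pr] by blast
    from iter_mono[OF fin pr this, of N]
    have "\<forall>e\<in>E. (Fmap E p ^^ N) ((Fmap E p ^^ (N * k)) (\<lambda>_. 0)) e \<le> (Fmap E p ^^ N) x e" by blast
    moreover have "(Fmap E p ^^ (N * Suc k)) = (Fmap E p ^^ N) \<circ> (Fmap E p ^^ (N * k))"
      by (simp add: funpow_add)
    ultimately show ?case using sup by fastforce
  qed
  show ?thesis
  proof
    fix e assume e: "e \<in> E"
    have sm: "strict_mono (\<lambda>k. N * k)" using N by (simp add: strict_mono_def)
    have "(\<lambda>k. (Fmap E p ^^ (N * k)) (\<lambda>_. 0) e) \<longlonglongrightarrow> Qfix E p e"
      using LIMSEQ_subseq_LIMSEQ[OF Qfix_lim[OF fin pr, of e] sm] by (simp add: o_def)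
    thus "Qfix E p e \<le> x e" using step e by (meson LIMSEQ_le_const2)
  qed
qed

lemma iter_cont:
  fixes p :: "real \<Rightarrow> ('v \<times> 'v \<Rightarrow> real)"
  assumes fin: "finite E" and pc: "\<forall>e\<in>E. ((\<lambda>l. p l e) \<longlongrightarrow> p0 e) F"
  shows "((\<lambda>l. (Fmap E (p l) ^^ m) x e') \<longlongrightarrow> (Fmap E p0 ^^ m) x e') F"
proof (induction m arbitrary: e')
  case 0 then show ?case by simp
next
  case (Suc m)
  have pc': "\<And>e. e \<in> preds E e' \<Longrightarrow> ((\<lambda>l. p l e) \<longlongrightarrow> p0 e) F" using pc preds_sub by blast
  define g where "g = (\<lambda>l. (Fmap E (p l) ^^ m) x)"
  define g0 where "g0 = (Fmap E p0 ^^ m) x"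
  have gl: "\<And>e. ((\<lambda>l. g l e) \<longlongrightarrow> g0 e) F" unfolding g_def g0_def by (rule Suc)
  have "((\<lambda>l. Fmap E (p l) (g l) e') \<longlongrightarrow> Fmap E p0 g0 e') F"
    unfolding Fmap_preds
    by (intro tendsto_prod tendsto_intros pc' gl)
  thus ?case unfolding g_def g0_def by simp
qed



lemma pos_prop:
  assumes irr: "hashimoto_irreducible E" and e0: "e0 \<in> E" and w0: "w e0 > (0::real)"
    and hprop: "\<forall>e'\<in>E. \<forall>e\<in>preds E e'. w e > 0 \<longrightarrow> w e' > 0"
  shows "\<forall>e\<in>E. w e > 0"
proof
  fix e assume e: "e \<in> E"
  have "(e0, e) \<in> (hash_rel E)\<^sup>*" using irr e0 e unfolding hashimoto_irreducible_def by blast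
  thus "w e > 0"
  proof (induction rule: rtrancl_induct)
    case base then show ?case using w0 .
  next
    case (step y z)
    have z: "z \<in> E" using step(2) unfolding hash_rel_def by auto
    have "y \<in> preds E z" using hash_preds[OF z] step(2) by blast
    thus ?case using hprop z step(3) by blast
  qed
qed

lemma subseq_fin:
  fixes f :: "nat \<Rightarrow> 'a \<Rightarrow> real"
  assumes "finite S" "\<forall>n. \<forall>e\<in>S. 0 \<le> f n e \<and> f n e \<le> 1"
  shows "\<exists>r. strict_mono r \<and> (\<forall>e\<in>S. convergent (\<lambda>n. f (r n) e))"
  using assms
proof (induction S rule: finite_induct)
  case empty
  then show ?case using strict_mono_id by blast
next
  case (insert x F)
  then obtain r where r: "strict_mono r" "\<forall>e\<in>F. convergent (\<lambda>n. f (r n) e)" by blast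
  obtain r' where r': "strict_mono r'" "monoseq (\<lambda>n. f (r (r' n)) x)"
    using seq_monosub[of "\<lambda>n. f (r n) x"] by (auto simp: o_def)
  have "Bseq (\<lambda>n. f (r (r' n)) x)"
    using insert.prems by (intro BseqI'[of _ 1]) auto
  hence cx: "convergent (\<lambda>n. f (r (r' n)) x)" using r'(2) Bseq_monoseq_convergent by blast
  have "\<forall>e\<in>F. convergent (\<lambda>n. f (r (r' n)) e)"
    using r(2) convergent_subseq_convergent[OF _ r'(1)] by (auto simp: o_def)
  moreover have "strict_mono (\<lambda>n. r (r' n))" using r(1) r'(1) strict_mono_o[of r r'] by (simp add: o_def)
  ultimately show ?case using cx by (intro exI[of _ "\<lambda>n. r (r' n)"]) auto
qed



lemma case1:
  fixes E :: "('v \<times> 'v) set"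
    and p :: "real \<Rightarrow> ('v \<times> 'v \<Rightarrow> real)"
    and lc :: real
    and ls :: "nat \<Rightarrow> real"
  assumes finE: "finite E"
    and p_cont: "\<forall>e\<in>E. continuous_on {0..1} (\<lambda>l. p l e)"
    and p_range: "\<forall>l\<in>{0..1}. \<forall>e\<in>E. p l e \<in> {0<..1}"
    and lc_range: "0 \<le> lc" "lc < 1"
    and Q_to_1: "\<forall>e\<in>E. ((\<lambda>l. Qfix E (p l) e) \<longlongrightarrow> 1) (at lc within {0..1})"
    and ls_range: "\<forall>n. ls n \<in> {0..1}"
    and ls_lim: "ls \<longlonglongrightarrow> lc"
    and ls_nontriv: "\<forall>n. \<exists>e\<in>E. Qfix E (p (ls n)) e \<noteq> 1"
    and ls_ne: "\<forall>n. ls n \<noteq> lc"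
  shows "\<exists>W. (\<forall>e\<in>E. 0 \<le> W e) \<and> (\<exists>e\<in>E. W e > 0) \<and> (\<forall>e'\<in>E. W e' = (\<Sum>e\<in>preds E e'. p lc e * W e))"
proof -
  have pr: "\<And>l. l \<in> {0..1} \<Longrightarrow> prange E (p l)" using p_range unfolding prange_def
    by (meson greaterThanAtMost_iff less_eq_real_def)
  define q where "q = (\<lambda>n. Qfix E (p (ls n)))"
  define u where "u = (\<lambda>n e. 1 - q n e)"
  define s where "s = (\<lambda>n. \<Sum>e\<in>E. u n e)"
  define w where "w = (\<lambda>n e. u n e / s n)"
  define L where "L = (\<lambda>n e'. \<Sum>e\<in>preds E e'. p (ls n) e * w n e)"
  have q01: "\<And>n e. 0 \<le> q n e \<and> q n e \<le> 1" unfolding q_def using Qfix01[OF finE pr] ls_range by blast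
  have u01: "\<And>n e. 0 \<le> u n e \<and> u n e \<le> 1" unfolding u_def using q01
    by (smt (verit))
  have ule: "\<And>n e. e \<in> E \<Longrightarrow> u n e \<le> s n" unfolding s_def
    using u01 finE by (intro member_le_sum) auto
  have spos: "\<And>n. s n > 0"
  proof -
    fix n
    obtain e where e: "e \<in> E" "q n e \<noteq> 1" using ls_nontriv unfolding q_def by blast
    hence "u n e > 0" using q01[of n e] unfolding u_def by auto
    thus "s n > 0" using ule[OF e(1), of n] by linarith
  qed
  have w01: "\<And>n e. e \<in> E \<Longrightarrow> 0 \<le> w n e \<and> w n e \<le> 1"
  proof -
    fix n e assume e: "e \<in> E"
    have "0 \<le> u n e" "u n e \<le> s n" "0 < s n" using u01[of n e] ule[OF e, of n] spos[of n] by auto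
    thus "0 \<le> w n e \<and> w n e \<le> 1" unfolding w_def by (simp add: divide_le_eq_1)
  qed
  have wsum: "\<And>n. (\<Sum>e\<in>E. w n e) = 1"
  proof -
    fix n
    have "(\<Sum>e\<in>E. w n e) = s n / s n" unfolding w_def s_def by (simp add: sum_divide_distrib[symmetric])
    thus "(\<Sum>e\<in>E. w n e) = 1" using spos[of n] by simp
  qed
  have uw: "\<And>n e. u n e = s n * w n e"
  proof -
    fix n e
    show "u n e = s n * w n e" unfolding w_def using spos[of n] by (simp add: field_simps)
  qed
  have fl: "filterlim ls (at lc within {0..1}) sequentially"
    using ls_lim ls_range ls_ne by (simp add: filterlim_at)
  have qlim: "\<And>e. e \<in> E \<Longrightarrow> (\<lambda>n. q n e) \<longlonglongrightarrow> 1"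
    unfolding q_def using filterlim_compose[OF Q_to_1[rule_format] fl] by blast
  have slim: "s \<longlonglongrightarrow> 0"
  proof -
    have "(\<lambda>n. \<Sum>e\<in>E. u n e) \<longlonglongrightarrow> (\<Sum>e\<in>E. 1 - 1)"
      unfolding u_def by (intro tendsto_sum tendsto_diff tendsto_const qlim)
    thus ?thesis unfolding s_def by simp
  qed
  have plim: "\<And>e. e \<in> E \<Longrightarrow> (\<lambda>n. p (ls n) e) \<longlonglongrightarrow> p lc e"
    by (intro continuous_on_tendsto_compose[OF p_cont[rule_format] ls_lim]) (use lc_range ls_range in auto)
  have bounds: "\<And>n e'. e' \<in> E \<Longrightarrow> L n e' - s n * (L n e')^2 \<le> w n e' \<and> w n e' \<le> L n e'"
  proof -
    fix n e' assume e': "e' \<in> E"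
    define a where "a = (\<lambda>e. p (ls n) e * u n e)"
    have a01: "\<forall>e\<in>preds E e'. 0 \<le> a e \<and> a e \<le> 1"
    proof
      fix e assume "e \<in> preds E e'"
      hence "e \<in> E" using preds_sub by blast
      hence "0 \<le> p (ls n) e" "p (ls n) e \<le> 1" using pr[OF ls_range[rule_format]] unfolding prange_def by auto
      thus "0 \<le> a e \<and> a e \<le> 1" unfolding a_def using u01[of n e] by (simp add: mult_le_one)
    qed
    have "q n e' = Fmap E (p (ls n)) (q n) e'" unfolding q_def using Qfix_fix[OF finE pr[OF ls_range[rule_format]]] by simp
    also have "\<dots> = (\<Prod>e\<in>preds E e'. 1 - a e)" unfolding Fmap_preds a_def u_def by (simp add: algebra_simps)
    finally have qe: "q n e' = (\<Prod>e\<in>preds E e'. 1 - a e)" .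
    have sa: "sum a (preds E e') = s n * L n e'" unfolding a_def L_def uw by (simp add: sum_distrib_left algebra_simps)
    have pb: "1 - sum a (preds E e') \<le> (\<Prod>e\<in>preds E e'. 1 - a e) \<and> (\<Prod>e\<in>preds E e'. 1 - a e) \<le> 1 - sum a (preds E e') + (sum a (preds E e'))^2"
      by (rule prod_bounds[OF finite_preds[OF finE] a01])
    have ue: "u n e' = 1 - (\<Prod>e\<in>preds E e'. 1 - a e)" using qe unfolding u_def by simp
    have "sum a (preds E e') - (sum a (preds E e'))^2 \<le> u n e' \<and> u n e' \<le> sum a (preds E e')"
      using pb ue by linarith
    hence "s n * L n e' - (s n * L n e')^2 \<le> s n * w n e' \<and> s n * w n e' \<le> s n * L n e'"
      by (simp only: sa uw)
    hence "s n * (L n e' - s n * (L n e')^2) \<le> s n * w n e' \<and> s n * w n e' \<le> s n * L n e'"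
      by (simp add: algebra_simps power2_eq_square)
    thus "L n e' - s n * (L n e')^2 \<le> w n e' \<and> w n e' \<le> L n e'" using spos[of n] by simp
  qed
  obtain r where r: "strict_mono r" "\<forall>e\<in>E. convergent (\<lambda>n. w (r n) e)"
    using subseq_fin[OF finE, of w] w01 by blast
  define W where "W = (\<lambda>e. lim (\<lambda>n. w (r n) e))"
  have wr: "\<And>e. e \<in> E \<Longrightarrow> (\<lambda>n. w (r n) e) \<longlonglongrightarrow> W e"
    unfolding W_def using r(2) convergent_LIMSEQ_iff by blast
  have pr': "\<And>e. e \<in> E \<Longrightarrow> (\<lambda>n. p (ls (r n)) e) \<longlonglongrightarrow> p lc e"
    using LIMSEQ_subseq_LIMSEQ[OF plim r(1)] by (simp add: o_def)
  have sr: "(\<lambda>n. s (r n)) \<longlonglongrightarrow> 0" using LIMSEQ_subseq_LIMSEQ[OF slim r(1)] by (simp add: o_def)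
  have Lr: "\<And>e'. (\<lambda>n. L (r n) e') \<longlonglongrightarrow> (\<Sum>e\<in>preds E e'. p lc e * W e)"
  proof -
    fix e'
    have "\<And>e. e \<in> preds E e' \<Longrightarrow> e \<in> E" using preds_sub by blast
    thus "(\<lambda>n. L (r n) e') \<longlonglongrightarrow> (\<Sum>e\<in>preds E e'. p lc e * W e)"
      unfolding L_def by (intro tendsto_sum tendsto_mult pr' wr) auto
  qed
  have eig: "\<forall>e'\<in>E. W e' = (\<Sum>e\<in>preds E e'. p lc e * W e)"
  proof
    fix e' assume e': "e' \<in> E"
    have low: "(\<lambda>n. L (r n) e' - s (r n) * (L (r n) e')^2) \<longlonglongrightarrow> (\<Sum>e\<in>preds E e'. p lc e * W e) - 0 * (\<Sum>e\<in>preds E e'. p lc e * W e)^2"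
      by (intro tendsto_intros Lr sr)
    have b1: "\<forall>n. w (r n) e' \<le> L (r n) e'" using bounds[OF e'] by blast
    have b2: "\<forall>n. L (r n) e' - s (r n) * (L (r n) e')^2 \<le> w (r n) e'" using bounds[OF e'] by blast
    have "W e' \<le> (\<Sum>e\<in>preds E e'. p lc e * W e)"
      by (rule LIMSEQ_le[OF wr[OF e'] Lr]) (use b1 in blast)
    moreover have "(\<Sum>e\<in>preds E e'. p lc e * W e) - 0 * (\<Sum>e\<in>preds E e'. p lc e * W e)^2 \<le> W e'"
      by (rule LIMSEQ_le[OF low wr[OF e']]) (use b2 in blast)
    ultimately show "W e' = (\<Sum>e\<in>preds E e'. p lc e * W e)" by simp
  qed
  have W0: "\<forall>e\<in>E. 0 \<le> W e" using wr w01 by (meson LIMSEQ_le_const)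
  have "(\<lambda>n. \<Sum>e\<in>E. w (r n) e) \<longlonglongrightarrow> (\<Sum>e\<in>E. W e)" by (intro tendsto_sum wr)
  moreover have "(\<lambda>n. \<Sum>e\<in>E. w (r n) e) = (\<lambda>n. 1)" using wsum by simp
  ultimately have "(\<lambda>n. 1::real) \<longlonglongrightarrow> (\<Sum>e\<in>E. W e)" by simp
  hence "(\<Sum>e\<in>E. W e) = 1" using LIMSEQ_unique tendsto_const by blast
  have "\<exists>e\<in>E. W e > 0"
  proof (rule ccontr)
    assume "\<not> (\<exists>e\<in>E. W e > 0)"
    hence "\<forall>e\<in>E. W e \<le> 0" by auto
    hence "(\<Sum>e\<in>E. W e) \<le> 0" by (intro sum_nonpos) auto
    thus False using \<open>(\<Sum>e\<in>E. W e) = 1\<close> by simp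
  qed
  thus ?thesis using W0 eig by blast
qed



lemma prod_le_factor:
  fixes f :: "'a \<Rightarrow> real"
  assumes "finite S" "\<forall>i\<in>S. 0 \<le> f i \<and> f i \<le> 1" "j \<in> S"
  shows "prod f S \<le> f j"
proof -
  have "prod f S = f j * prod f (S - {j})" using assms by (simp add: prod.remove)
  moreover have "prod f (S - {j}) \<le> 1" using assms by (intro prod_le_1) auto
  moreover have "0 \<le> f j" using assms by auto
  ultimately show ?thesis by (simp add: mult_left_le)
qed

lemma case2:
  fixes E :: "('v \<times> 'v) set"
    and p :: "real \<Rightarrow> ('v \<times> 'v \<Rightarrow> real)"
    and lc :: real
  assumes finE: "finite E"
    and irr: "hashimoto_irreducible E"
    and p_cont: "\<forall>e\<in>E. continuous_on {0..1} (\<lambda>l. p l e)"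
    and p_range: "\<forall>l\<in>{0..1}. \<forall>e\<in>E. p l e \<in> {0<..1}"
    and lc_range: "0 \<le> lc" "lc < 1"
    and Q_to_1: "\<forall>e\<in>E. ((\<lambda>l. Qfix E (p l) e) \<longlongrightarrow> 1) (at lc within {0..1})"
    and e1: "e1 \<in> E" and Qe1: "Qfix E (p lc) e1 \<noteq> 1"
  shows "\<exists>v. (\<forall>e\<in>E. 0 < v e) \<and> (\<forall>e'\<in>E. v e' = (\<Sum>e\<in>preds E e'. p lc e * v e))"
proof -
  have pr: "\<And>l. l \<in> {0..1} \<Longrightarrow> prange E (p l)" using p_range unfolding prange_def
    by (meson greaterThanAtMost_iff less_eq_real_def)
  have lc01: "lc \<in> {0..1}" using lc_range by auto
  define P0 where "P0 = p lc"
  have prl: "prange E P0" unfolding P0_def by (rule pr[OF lc01])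
  have ppos: "\<And>e. e \<in> E \<Longrightarrow> 0 < P0 e \<and> P0 e \<le> 1" using p_range lc01 unfolding P0_def by auto
  define Q0 where "Q0 = Qfix E P0"
  define v where "v = (\<lambda>e. 1 - Q0 e)"
  have Q01: "\<And>e. 0 \<le> Q0 e \<and> Q0 e \<le> 1" unfolding Q0_def using Qfix01[OF finE prl] by blast
  have v01: "\<And>e. 0 \<le> v e \<and> v e \<le> 1"
  proof -
    fix e show "0 \<le> v e \<and> v e \<le> 1" using Q01[of e] unfolding v_def by linarith
  qed
  have fixQ: "\<And>e'. Fmap E P0 Q0 e' = Q0 e'" unfolding Q0_def by (rule Qfix_fix[OF finE prl])
  have a01: "\<And>e' e. e \<in> preds E e' \<Longrightarrow> 0 \<le> P0 e * v e \<and> P0 e * v e \<le> 1"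
  proof -
    fix e e' assume "e \<in> preds E e'"
    hence "e \<in> E" using preds_sub by blast
    hence "0 < P0 e" "P0 e \<le> 1" using ppos by auto
    thus "0 \<le> P0 e * v e \<and> P0 e * v e \<le> 1" using v01[of e] by (simp add: mult_le_one)
  qed
  have Fexp: "\<And>(t::real) e'. Fmap E P0 (\<lambda>e. 1 - t * v e) e' = (\<Prod>e\<in>preds E e'. 1 - t * (P0 e * v e))"
    unfolding Fmap_preds by (simp add: algebra_simps)
  have Q0eq: "\<And>e'. Q0 e' = (\<Prod>e\<in>preds E e'. 1 - (P0 e * v e))"
  proof -
    fix e'
    have "Q0 = (\<lambda>e. 1 - 1 * v e)" unfolding v_def by simp
    hence "Q0 e' = Fmap E P0 (\<lambda>e. 1 - 1 * v e) e'" using fixQ[of e'] by simp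
    thus "Q0 e' = (\<Prod>e\<in>preds E e'. 1 - (P0 e * v e))" using Fexp[of 1 e'] by simp
  qed
  have vpos: "\<forall>e\<in>E. 0 < v e"
  proof (rule pos_prop[OF irr e1])
    show "0 < v e1" using Q01[of e1] Qe1 unfolding v_def Q0_def P0_def by auto
    show "\<forall>e'\<in>E. \<forall>e\<in>preds E e'. 0 < v e \<longrightarrow> 0 < v e'"
    proof (intro ballI impI)
      fix e' e assume e': "e' \<in> E" and e: "e \<in> preds E e'" and ve: "0 < v e"
      have "e \<in> E" using e preds_sub by blast
      hence "0 < P0 e * v e" using ppos ve by simp
      moreover have "Q0 e' \<le> 1 - P0 e * v e"
        unfolding Q0eq
        by (rule prod_le_factor[OF finite_preds[OF finE] _ e, of "\<lambda>e. 1 - P0 e * v e"])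
           (use a01 in \<open>auto\<close>)
      ultimately show "0 < v e'" unfolding v_def by simp
    qed
  qed
  define Lv where "Lv = (\<lambda>e'. \<Sum>e\<in>preds E e'. P0 e * v e)"
  have Lv_sum: "\<And>(t::real) e'. (\<Sum>e\<in>preds E e'. t * (P0 e * v e)) = t * Lv e'"
    unfolding Lv_def by (simp add: sum_distrib_left)
  define x where "x = (\<lambda>t e. 1 - t * v e)"
  have supt: "\<And>(t::real) e'. 0 \<le> t \<Longrightarrow> t \<le> 1 \<Longrightarrow> Fmap E P0 (x t) e' \<le> x t e'"
  proof -
    fix t :: real and e' assume t: "0 \<le> t" "t \<le> 1"
    have "Fmap E P0 (x t) e' = (\<Prod>e\<in>preds E e'. 1 - t * (P0 e * v e))" unfolding x_def by (rule Fexp)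
    also have "\<dots> \<le> 1 - t + t * (\<Prod>e\<in>preds E e'. 1 - (P0 e * v e))"
      by (rule prod_star[OF finite_preds[OF finE] _ t]) (use a01 in auto)
    also have "\<dots> = x t e'" unfolding x_def Q0eq[of e', symmetric] by (simp add: v_def algebra_simps)
    finally show "Fmap E P0 (x t) e' \<le> x t e'" .
  qed
  have eig: "\<forall>e'\<in>E. v e' = Lv e'"
  proof (rule ccontr)
    assume "\<not> (\<forall>e'\<in>E. v e' = Lv e')"
    then obtain e2 where e2: "e2 \<in> E" "v e2 \<noteq> Lv e2" by blast
    define S where "S = Lv e2"
    have S0: "0 \<le> S" unfolding S_def Lv_def using a01 by (intro sum_nonneg) auto
    have ta: "\<And>t. 0 \<le> t \<Longrightarrow> t \<le> 1 \<Longrightarrow> \<forall>e\<in>preds E e2. 0 \<le> t * (P0 e * v e) \<and> t * (P0 e * v e) \<le> 1"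
      using a01 by (simp add: mult_le_one)
    have "S > v e2"
    proof (rule ccontr)
      assume "\<not> S > v e2"
      hence lt: "S < v e2" using e2(2) unfolding S_def by auto
      have "1 - (1/2) * S \<le> Fmap E P0 (x (1/2)) e2"
        using prod_bounds[OF finite_preds[OF finE] ta[of "1/2"]] Fexp[of "1/2" e2] Lv_sum[of "1/2" e2]
        unfolding x_def S_def by simp
      moreover have "Fmap E P0 (x (1/2)) e2 \<le> 1 - (1/2) * v e2" using supt[of "1/2" e2] unfolding x_def by simp
      ultimately show False using lt by simp
    qed
    define t where "t = (S - v e2) / (2 * S^2 + 2)"
    have den: "0 < 2 * S^2 + 2" by (simp add: add_nonneg_pos)
    have t0: "0 < t" unfolding t_def using \<open>S > v e2\<close> den by (simp add: divide_pos_pos)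
    have tS: "t * S^2 < S - v e2"
    proof -
      have "t * S^2 = (S - v e2) * (S^2 / (2 * S^2 + 2))" unfolding t_def by (simp add: field_simps)
      moreover have "S^2 / (2 * S^2 + 2) < 1" using den by (simp add: divide_less_eq)
      moreover have "(S - v e2) * (S^2 / (2 * S^2 + 2)) < (S - v e2) * 1"
        using \<open>S^2 / (2 * S^2 + 2) < 1\<close> \<open>S > v e2\<close> by (intro mult_strict_left_mono) auto
      ultimately show ?thesis by simp
    qed
    have th: "t \<le> 1/2"
    proof -
      have "S \<le> S^2 + 1"
      proof (cases "S \<le> 1")
        case True
        have "0 \<le> S^2" by simp
        then show ?thesis using True by linarith
      next
        case False
        hence "S * 1 \<le> S * S" using S0 by (intro mult_left_mono) auto
        then show ?thesis by (simp add: power2_eq_square)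
      qed
      hence "S - v e2 \<le> S^2 + 1" using v01[of e2] by linarith
      thus ?thesis unfolding t_def using den by (simp add: divide_le_eq)
    qed
    have strict: "Fmap E P0 (x t) e2 < x t e2"
    proof -
      have "Fmap E P0 (x t) e2 \<le> 1 - t * S + (t * S)^2"
        using prod_bounds[OF finite_preds[OF finE] ta[of t]] Fexp[of t e2] Lv_sum[of t e2] t0 th
        unfolding x_def S_def by simp
      also have "\<dots> = 1 - t * S + t * (t * S^2)" by (simp add: power2_eq_square)
      also have "\<dots> < 1 - t * S + t * (S - v e2)" using tS t0 by simp
      also have "\<dots> = x t e2" unfolding x_def by (simp add: algebra_simps)
      finally show ?thesis .
    qed
    define X where "X = x t"
    have X0: "\<And>e. 0 < X e \<and> X e \<le> 1"
    proof -
      fix e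
      have "t * v e \<le> t" using v01[of e] t0 by (simp add: mult_left_le)
      moreover have "0 \<le> t * v e" using v01[of e] t0 by simp
      ultimately show "0 < X e \<and> X e \<le> 1" unfolding X_def x_def using th by linarith
    qed
    have FX: "\<forall>e\<in>E. 0 \<le> Fmap E P0 X e \<and> Fmap E P0 X e \<le> X e"
    proof
      fix e assume "e \<in> E"
      have "\<forall>e\<in>E. 0 \<le> X e" using X0 less_imp_le by blast
      hence "0 \<le> Fmap E P0 X e" by (rule Fnonneg[OF finE prl])
      moreover have "Fmap E P0 X e \<le> X e" unfolding X_def using supt[of t e] t0 th by simp
      ultimately show "0 \<le> Fmap E P0 X e \<and> Fmap E P0 X e \<le> X e" by simp
    qed
    define y where "y = (\<lambda>m. (Fmap E P0 ^^ m) X)"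
    have dec: "\<And>m. \<forall>e\<in>E. 0 \<le> y (Suc m) e \<and> y (Suc m) e \<le> y m e"
    proof -
      fix m
      from iter_mono[OF finE prl FX, of m]
      show "\<forall>e\<in>E. 0 \<le> y (Suc m) e \<and> y (Suc m) e \<le> y m e"
        unfolding y_def by (simp add: funpow_Suc_right del: funpow.simps)
    qed
    have yle: "\<And>m. \<forall>e\<in>E. 0 \<le> y m e \<and> y m e \<le> X e"
    proof -
      fix m show "\<forall>e\<in>E. 0 \<le> y m e \<and> y m e \<le> X e"
      proof (induction m)
        case 0 then show ?case unfolding y_def using X0 by (simp add: less_imp_le)
      next
        case (Suc m)
        show ?case
        proof
          fix e assume e: "e \<in> E"
          have "0 \<le> y (Suc m) e" "y (Suc m) e \<le> y m e" using dec[of m] e by auto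
          moreover have "y m e \<le> X e" using Suc e by auto
          ultimately show "0 \<le> y (Suc m) e \<and> y (Suc m) e \<le> X e" by simp
        qed
      qed
    qed
    have ydec: "\<And>m k e. e \<in> E \<Longrightarrow> y (m + k) e \<le> y m e"
    proof -
      fix m k e assume e: "e \<in> E"
      show "y (m + k) e \<le> y m e"
      proof (induction k)
        case 0 then show ?case by simp
      next
        case (Suc k)
        have "y (Suc (m + k)) e \<le> y (m + k) e" using dec[of "m + k"] e by auto
        then show ?case using Suc by simp
      qed
    qed
    have closure: "\<And>e' e. e' \<in> E \<Longrightarrow> \<forall>m. y m e' = X e' \<Longrightarrow> e \<in> preds E e' \<Longrightarrow> \<forall>m. y m e = X e"
    proof (intro allI)
      fix e' e m assume e': "e' \<in> E" and all: "\<forall>m. y m e' = X e'" and e: "e \<in> preds E e'"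
      have eE: "e \<in> E" using e preds_sub by blast
      define f where "f = (\<lambda>e. 1 - P0 e + P0 e * y m e)"
      define g where "g = (\<lambda>e. 1 - P0 e + P0 e * X e)"
      have fg: "\<forall>i\<in>preds E e'. 0 \<le> f i \<and> f i \<le> g i"
      proof
        fix i assume "i \<in> preds E e'"
        hence iE: "i \<in> E" using preds_sub by blast
        have "0 \<le> y m i" "y m i \<le> X i" using yle[of m] iE by auto
        moreover have "0 < P0 i" "P0 i \<le> 1" using ppos[OF iE] by auto
        moreover have "0 \<le> P0 i * y m i" using calculation by simp
        moreover have "P0 i * y m i \<le> P0 i * X i" using calculation by (intro mult_left_mono) auto
        ultimately show "0 \<le> f i \<and> f i \<le> g i" unfolding f_def g_def by linarith
      qed
      have pf: "prod f (preds E e') = y (Suc m) e'" unfolding f_def y_def by (simp add: Fmap_preds)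
      have pg: "prod g (preds E e') = y 1 e'" unfolding g_def y_def by (simp add: Fmap_preds)
      have "prod f (preds E e') = prod g (preds E e')" using pf pg all by simp
      moreover have "prod g (preds E e') > 0" using pg all X0[of e'] by simp
      ultimately have "f e = g e" using prod_eq_factors[OF finite_preds[OF finE] fg _ _ e] by blast
      hence "P0 e * y m e = P0 e * X e" unfolding f_def g_def by simp
      thus "y m e = X e" using ppos[OF eE] by simp
    qed
    have reach: "\<forall>e\<in>E. \<exists>m. y m e < X e"
    proof
      fix e assume e: "e \<in> E"
      have "(e2, e) \<in> (hash_rel E)\<^sup>*" using irr e2(1) e unfolding hashimoto_irreducible_def by blast
      thus "\<exists>m. y m e < X e"
      proof (induction rule: rtrancl_induct)
        case base
        have "y 1 e2 < X e2" using strict unfolding y_def X_def by simp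
        then show ?case by blast
      next
        case (step a b)
        have b: "b \<in> E" using step(2) unfolding hash_rel_def by auto
        have a: "a \<in> preds E b" using hash_preds[OF b] step(2) by blast
        show ?case
        proof (rule ccontr)
          assume "\<not> (\<exists>m. y m b < X b)"
          hence "\<forall>m. y m b = X b" using yle b by (meson less_eq_real_def)
          hence "\<forall>m. y m a = X a" using closure[OF b _ a] by blast
          thus False using step(3) by simp
        qed
      qed
    qed
    then obtain fm where fm: "\<forall>e\<in>E. y (fm e) e < X e" using bchoice[OF reach] by blast
    define N where "N = Suc (\<Sum>e\<in>E. fm e)"
    have yN: "\<forall>e\<in>E. y N e < X e"
    proof
      fix e assume e: "e \<in> E"
      have "fm e \<le> (\<Sum>e\<in>E. fm e)" using e finE by (intro member_le_sum) auto
      define k where "k = N - fm e"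
      have k: "N = fm e + k" unfolding k_def N_def using \<open>fm e \<le> (\<Sum>e\<in>E. fm e)\<close> by simp
      have "y N e \<le> y (fm e) e" using ydec[OF e, of "fm e" k] k by simp
      thus "y N e < X e" using fm e by fastforce
    qed
    define F where "F = at lc within {0..1::real}"
    have pc: "\<forall>e\<in>E. ((\<lambda>l. p l e) \<longlongrightarrow> P0 e) F"
      using p_cont lc01 unfolding continuous_on_def F_def P0_def by blast
    have ev1: "\<forall>e\<in>E. eventually (\<lambda>l. (Fmap E (p l) ^^ N) X e < X e) F"
    proof
      fix e assume e: "e \<in> E"
      have "((\<lambda>l. (Fmap E (p l) ^^ N) X e) \<longlongrightarrow> y N e) F"
        unfolding y_def by (rule iter_cont[OF finE pc])
      thus "eventually (\<lambda>l. (Fmap E (p l) ^^ N) X e < X e) F"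
        using yN e order_tendstoD(2) by blast
    qed
    have ev2: "eventually (\<lambda>l. \<forall>e\<in>E. (Fmap E (p l) ^^ N) X e < X e) F"
      using eventually_ball_finite[OF finE ev1] .
    have ev3: "eventually (\<lambda>l. l \<in> {0..1}) F" unfolding F_def eventually_at_filter by simp
    have ev4: "eventually (\<lambda>l. Qfix E (p l) e2 \<le> X e2) F"
      using ev2 ev3
    proof eventually_elim
      case (elim l)
      have "\<forall>e\<in>E. Qfix E (p l) e \<le> X e"
      proof (rule Qfix_le[OF finE pr[OF elim(2)]])
        show "0 < N" unfolding N_def by simp
        show "\<forall>e\<in>E. 0 \<le> X e" using X0 less_imp_le by blast
        show "\<forall>e\<in>E. (Fmap E (p l) ^^ N) X e \<le> X e" using elim(1) less_imp_le by blast
      qed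
      thus ?case using e2(1) by blast
    qed
    have "X e2 < 1" unfolding X_def x_def using vpos e2(1) t0 by simp
    hence ev5: "eventually (\<lambda>l. X e2 < Qfix E (p l) e2) F"
      using Q_to_1 e2(1) order_tendstoD(1) unfolding F_def by blast
    have "eventually (\<lambda>l. False) F" using ev4 ev5 by eventually_elim simp
    hence "F = bot" using eventually_False by blast
    moreover have "F \<noteq> bot"
    proof (cases "lc = 0")
      case True
      have "F = at_right 0" unfolding F_def True by (rule at_within_Icc_at_right) simp
      thus ?thesis by simp
    next
      case False
      hence "0 < lc" using lc_range by simp
      hence "F = at lc" unfolding F_def using lc_range by (intro at_within_Icc_at) auto
      thus ?thesis by simp
    qed
    ultimately show False by simp
  qed
  show ?thesis using vpos eig unfolding Lv_def P0_def by blast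
qed


theorem lemma3:
  fixes E :: "('v \<times> 'v) set"
    and p :: "real \<Rightarrow> ('v \<times> 'v \<Rightarrow> real)"
    and lc :: real
    and ls :: "nat \<Rightarrow> real"
  assumes finE: "finite E"
    and irr: "hashimoto_irreducible E"
    and p_cont: "\<forall>e\<in>E. continuous_on {0..1} (\<lambda>l. p l e)"
    and p_range: "\<forall>l\<in>{0..1}. \<forall>e\<in>E. p l e \<in> {0<..1}"
    and lc_range: "0 \<le> lc" "lc < 1"
    and Q_to_1: "\<forall>e\<in>E. ((\<lambda>l. Qfix E (p l) e) \<longlongrightarrow> 1) (at lc within {0..1})"
    and ls_range: "\<forall>n. ls n \<in> {0..1}"
    and ls_lim: "ls \<longlonglongrightarrow> lc"
    and ls_nontriv: "\<forall>n. \<exists>e\<in>E. Qfix E (p (ls n)) e \<noteq> 1"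
  shows "rho_BTp E (p lc) = 1"
proof -
  have Ene: "E \<noteq> {}" using ls_nontriv by blast
  have lc01: "lc \<in> {0..1}" using lc_range by auto
  have pl: "\<And>e. e \<in> E \<Longrightarrow> 0 < p lc e" using p_range lc01 by auto
  obtain v where vpos: "\<forall>e\<in>E. 0 < v e" and eig: "\<forall>e'\<in>E. v e' = (\<Sum>e\<in>preds E e'. p lc e * v e)"
  proof (cases "\<exists>n. ls n = lc")
    case True
    then obtain n where n: "ls n = lc" by blast
    obtain e1 where e1: "e1 \<in> E" "Qfix E (p lc) e1 \<noteq> 1" using ls_nontriv n by metis
    show ?thesis using case2[OF finE irr p_cont p_range lc_range Q_to_1 e1] that by blast
  next
    case False
    hence ne: "\<forall>n. ls n \<noteq> lc" by blast
    obtain W where W0: "\<forall>e\<in>E. 0 \<le> W e" and Wp: "\<exists>e\<in>E. W e > 0"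
      and We: "\<forall>e'\<in>E. W e' = (\<Sum>e\<in>preds E e'. p lc e * W e)"
      using case1[OF finE p_cont p_range lc_range Q_to_1 ls_range ls_lim ls_nontriv ne] by blast
    obtain e0 where e0: "e0 \<in> E" "W e0 > 0" using Wp by blast
    have "\<forall>e\<in>E. 0 < W e"
    proof (rule pos_prop[where w=W, OF irr e0(1) e0(2)])
      show "\<forall>e'\<in>E. \<forall>e\<in>preds E e'. 0 < W e \<longrightarrow> 0 < W e'"
      proof (intro ballI impI)
        fix e' e assume e': "e' \<in> E" and e: "e \<in> preds E e'" and We0: "0 < W e"
        have eE: "e \<in> E" using e preds_sub by blast
        have nn: "\<forall>i\<in>preds E e'. 0 \<le> p lc i * W i"
        proof
          fix i assume "i \<in> preds E e'"
          hence "i \<in> E" using preds_sub by blast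
          hence "0 \<le> p lc i" "0 \<le> W i" using pl[of i] W0 by auto
          thus "0 \<le> p lc i * W i" by simp
        qed
        have "p lc e * W e \<le> (\<Sum>i\<in>preds E e'. p lc i * W i)"
          by (rule member_le_sum[OF e _ finite_preds[OF finE]]) (use nn in blast)
        moreover have "0 < p lc e * W e" using pl[OF eE] We0 by simp
        ultimately show "0 < W e'" using We e' by simp
      qed
    qed
    thus ?thesis using We that by blast
  qed
  show ?thesis
    by (rule spec_one[OF finE Ene _ vpos eig]) (use pl less_imp_le in blast)
qed

end
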